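(* Let $S$ be a sample (a finite sequence of examples $z=(x,y)\in\mathcal X\times\{\pm1\}$), let $k>0$, and let $T\ge 2k\log|S|$. Let $p_1$ be the uniform distribution over the entries of $S$, and for $t=1,\dots,T$ let $h_t:\mathcal X\to\{\pm1\}$ be arbitrary hypotheses satisfying $\sum_{z=(x,y)\in S}p_t(z)1[h_t(x)\ne y]\le\frac{1}{5k}$ (i.e. $h_t$ is $\alpha$-weak for $p_t$ with $\alpha=\frac12-\frac1{5k}$), where $p_{t+1}(z)\propto p_t(z)\,2^{-1[h_t(x)=y]}$ for all $z\in S$ (Adaboost with parameter $\eta=\ln 2$). Then for every $z=(x,y)\in S$, $\frac1T\sum_{t=1}^T1[h_t(x)\ne y]\le\frac1k$.
   Context: $\log$ denotes the base-2 logarithm. The normalization in $p_{t+1}$ is over the entries of $S$ so that $p_{t+1}$ is a probability distribution. *)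

theory Defs
  imports Complex_Main
begin

text \<open>Distributions over the entries of S are functions on the indices i < length S.
  ada_weight S h t i is the unnormalised Adaboost (eta = ln 2) update factor
  2 powr (- 1[h_t(x_i) = y_i]).\<close>

definition ada_factor :: "('a \<times> int) list \<Rightarrow> (nat \<Rightarrow> 'a \<Rightarrow> int) \<Rightarrow> nat \<Rightarrow> nat \<Rightarrow> real" where
  "ada_factor S h t i = (2::real) powr (- of_bool (h t (fst (S ! i)) = snd (S ! i)))"

text \<open>The value at t = 0 is irrelevant (set to uniform).\<close>

primrec ada_p :: "('a \<times> int) list \<Rightarrow> (nat \<Rightarrow> 'a \<Rightarrow> int) \<Rightarrow> nat \<Rightarrow> nat \<Rightarrow> real" where
  "ada_p S h 0 i = 1 / real (length S)"
| "ada_p S h (Suc t) i =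
     (if t = 0 then 1 / real (length S)
      else ada_p S h t i * ada_factor S h t i /
           (\<Sum>j<length S. ada_p S h t j * ada_factor S h t j))"

end

theory Submission
  imports Defs
begin

lemma ln2_half: "ln (2::real) \<ge> 1/2"
proof -
  have "ln (1/2::real) \<le> 1/2 - 1" by (rule ln_le_minus_one) auto
  moreover have "ln (1/2::real) = - ln 2" by (simp add: ln_div)
  ultimately show ?thesis by simp
qed

theorem lemma2:
  fixes S :: "('a \<times> int) list" and h :: "nat \<Rightarrow> 'a \<Rightarrow> int"
    and k :: real and T :: nat
  assumes labels: "\<forall>z \<in> set S. snd z \<in> {-1, 1}"
    and hyps: "\<forall>t x. h t x \<in> {-1, 1}"
    and kpos: "k > 0"
    and Tbig: "real T \<ge> 2 * k * log 2 (real (length S))"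
    and weak: "\<forall>t \<in> {1..T}.
       (\<Sum>i<length S. ada_p S h t i * of_bool (h t (fst (S ! i)) \<noteq> snd (S ! i))) \<le> 1 / (5 * k)"
  shows "\<forall>i < length S.
     (1 / real T) * (\<Sum>t=1..T. of_bool (h t (fst (S ! i)) \<noteq> snd (S ! i))) \<le> 1 / k"
proof (intro allI impI)
  fix i assume i: "i < length S"
  define m where "m = length S"
  have m0: "m > 0" using i m_def by (cases S) auto
  define e where "e t j = (of_bool (h t (fst (S ! j)) \<noteq> snd (S ! j)) :: real)" for t j
  define F where "F t j = ada_factor S h t j" for t j
  have Fe: "F t j = (1 + e t j) / 2" for t j
    by (simp add: F_def e_def ada_factor_def)
  have Fpos: "F t j > 0" for t j by (simp add: F_def ada_factor_def)
  define w where "w t j = (\<Prod>s\<in>{1..<t}. F s j)" for t j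
  define Z where "Z t = (\<Sum>j<m. w t j)" for t
  have wpos: "w t j > 0" for t j unfolding w_def using Fpos by (simp add: prod_pos)
  have Zpos: "Z t > 0" for t unfolding Z_def using m0 wpos
    by (intro sum_pos) auto
  have wS: "w (Suc t) j = w t j * F t j" if "t \<ge> 1" for t j
    unfolding w_def using that by (simp add: prod.atLeastLessThan_Suc mult.commute)
  have pw: "ada_p S h t j = w t j / Z t" if "t \<ge> 1" for t j
    using that
  proof (induction t arbitrary: j)
    case 0 then show ?case by simp
  next
    case (Suc t)
    show ?case
    proof (cases "t = 0")
      case True
      then show ?thesis by (simp add: w_def Z_def m_def)
    next
      case False
      hence t1: "t \<ge> 1" by simp
      have "(\<Sum>j<length S. ada_p S h t j * ada_factor S h t j) = (\<Sum>j<m. w t j * F t j) / Z t"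
        using Suc.IH[OF t1] by (simp add: m_def F_def sum_divide_distrib)
      also have "(\<Sum>j<m. w t j * F t j) = Z (Suc t)" unfolding Z_def using wS[OF t1] by simp
      finally have "(\<Sum>j<length S. ada_p S h t j * ada_factor S h t j) = Z (Suc t) / Z t" .
      hence "ada_p S h (Suc t) j = ada_p S h t j * F t j / (Z (Suc t) / Z t)"
        using False by (simp add: F_def)
      also have "\<dots> = (w t j / Z t) * F t j * Z t / Z (Suc t)"
        using Suc.IH[OF t1] Zpos[of t] Zpos[of "Suc t"] by simp
      also have "\<dots> = w (Suc t) j / Z (Suc t)"
        using wS[OF t1] Zpos[of t] by simp
      finally show ?thesis .
    qed
  qed
  define a where "a = 1 / (5 * k)"
  have a0: "a > 0" using kpos a_def by simp
  have Zstep: "Z (Suc t) \<le> Z t * ((1 + a) / 2)" if t: "t \<in> {1..T}" for t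
  proof -
    have t1: "t \<ge> 1" using t by simp
    have sp: "(\<Sum>j<m. ada_p S h t j) = 1"
      using pw[OF t1] Zpos[of t] by (simp add: Z_def sum_divide_distrib[symmetric])
    have "Z (Suc t) = (\<Sum>j<m. w t j * F t j)" unfolding Z_def using wS[OF t1] by simp
    also have "\<dots> = Z t * (\<Sum>j<m. ada_p S h t j * F t j)"
      using pw[OF t1] Zpos[of t] by (simp add: sum_distrib_left)
    also have "(\<Sum>j<m. ada_p S h t j * F t j) = (1 + (\<Sum>j<m. ada_p S h t j * e t j)) / 2"
      using sp by (simp add: Fe sum_divide_distrib[symmetric] algebra_simps sum.distrib)
    also have "(\<Sum>j<m. ada_p S h t j * e t j) \<le> a"
      using weak t by (simp add: a_def e_def m_def)
    finally show ?thesis using Zpos[of t] by (simp add: mult_left_mono)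
  qed
  have Zbound: "Z (Suc t) \<le> m * ((1 + a) / 2) ^ t" if "t \<le> T" for t
    using that
  proof (induction t)
    case 0 then show ?case by (simp add: Z_def w_def)
  next
    case (Suc t)
    have "Z (Suc (Suc t)) \<le> Z (Suc t) * ((1 + a) / 2)" using Zstep[of "Suc t"] Suc by simp
    also have "\<dots> \<le> m * ((1 + a) / 2) ^ t * ((1 + a) / 2)"
      using Suc a0 by (intro mult_right_mono) auto
    finally show ?case by (simp add: mult.commute mult.left_commute)
  qed
  define M where "M = (\<Sum>t=1..T. e t i)"
  have wM: "w (Suc n) i * 2 ^ n = 2 powr (\<Sum>t=1..n. e t i)" for n
  proof (induction n)
    case 0 then show ?case by (simp add: w_def)
  next
    case (Suc n)
    have e2: "2 * F (Suc n) i = 2 powr e (Suc n) i" by (simp add: Fe e_def)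
    have "w (Suc (Suc n)) i * 2 ^ Suc n = (w (Suc n) i * 2 ^ n) * (2 * F (Suc n) i)"
      using wS[of "Suc n"] by simp
    also have "\<dots> = 2 powr (\<Sum>t=1..n. e t i) * 2 powr e (Suc n) i" using Suc e2 by simp
    also have "\<dots> = 2 powr (\<Sum>t=1..Suc n. e t i)" by (simp add: powr_add)
    finally show ?case .
  qed
  have wZ: "w (Suc T) i \<le> Z (Suc T)"
    unfolding Z_def using i m_def wpos
    by (intro member_le_sum) (auto intro: less_imp_le)
  have "2 powr M \<le> Z (Suc T) * 2 ^ T" using wM[of T] wZ M_def
    by (metis mult_right_mono zero_le_power zero_le_numeral)
  also have "\<dots> \<le> m * ((1 + a) / 2) ^ T * 2 ^ T" using Zbound[of T] by simp
  also have "\<dots> = m * (1 + a) ^ T" by (simp add: power_divide)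
  finally have M1: "2 powr M \<le> m * (1 + a) ^ T" .
  have "M * ln 2 = ln (2 powr M)" by (simp add: ln_powr)
  also have "\<dots> \<le> ln (m * (1 + a) ^ T)" proof -
    have "0 < real m * (1 + a) ^ T" using m0 a0 by simp
    thus ?thesis using M1 by (subst ln_le_cancel_iff) auto
  qed
  also have "\<dots> = ln m + T * ln (1 + a)" using m0 a0 by (simp add: ln_mult ln_realpow)
  also have "ln (1 + a) \<le> a" using a0 by (simp add: ln_add_one_self_le_self)
  also have "ln m = log 2 m * ln 2" using m0 by (simp add: log_def)
  finally have M2: "M * ln 2 \<le> log 2 m * ln 2 + T * a" by (simp add: mult_left_mono)
  have l2: "ln (2::real) \<ge> 1/2" by (rule ln2_half)
  have lg: "log 2 m \<le> T / (2 * k)" using Tbig kpos m_def by (simp add: field_simps)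
  have "M * ln 2 \<le> T / (2 * k) * ln 2 + T / (2*k) * ln 2"
  proof -
    have "log 2 m * ln 2 \<le> T / (2 * k) * ln 2" using lg l2 by (intro mult_right_mono) auto
    moreover have "T * a \<le> T / (2*k) * ln 2"
    proof -
      have "T * a = T / (5 * k)" by (simp add: a_def)
      also have "\<dots> \<le> T / (2*k) * (1/2)" using kpos by (simp add: field_simps)
      also have "\<dots> \<le> T / (2*k) * ln 2" using l2 kpos by (intro mult_left_mono) auto
      finally show ?thesis .
    qed
    ultimately show ?thesis using M2 by linarith
  qed
  hence "M \<le> T / k" using l2 kpos by (simp add: field_simps)
  show "(1 / real T) * (\<Sum>t=1..T. of_bool (h t (fst (S ! i)) \<noteq> snd (S ! i))) \<le> 1 / k"
  proof (cases "T = 0")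
    case True then show ?thesis using kpos by simp
  next
    case False
    then show ?thesis using \<open>M \<le> T / k\<close> kpos by (simp add: M_def e_def field_simps)
  qed
qed

end
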